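(* Let $q$ be a prime power, $n\ge 2$, $K=\mathbb{F}_{q^n}$, $d=\frac{q^n-1}{q-1}$, and for $1\le i\le n-1$ let $E_{i,\mathrm{Kum}}=K(x,y)$ with $y^d=s_{n,i}(x)$. Then $E_{i,\mathrm{Kum}}\cong E_{n-i,\mathrm{Kum}}$ as function fields over $K$.
   Context: For a prime power $q$ and integers $n\ge 1$, $0\le i\le n$, the $i$-th $(n,q)$-elementary symmetric polynomial is $s_{n,i}(t)=\sum_{0\le j_1<\dots<j_i\le n-1} t^{q^{j_1}+\dots+q^{j_i}}\in\mathbb{F}_p[t]$. *)

theory Defs
  imports "HOL-Computational_Algebra.Computational_Algebra"
begin

definition esym_q :: "nat \<Rightarrow> nat \<Rightarrow> nat \<Rightarrow> 'a::comm_ring_1 poly" where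
  "esym_q q n i = (\<Sum>S\<in>{S. S \<subseteq> {..<n} \<and> card S = i}. monom 1 (\<Sum>j\<in>S. q ^ j))"

definition rat_const :: "'k::field \<Rightarrow> 'k poly fract" where
  "rat_const c = Fract [:c:] 1"

definition rat_of_poly :: "'k::field poly \<Rightarrow> 'k poly fract" where
  "rat_of_poly p = Fract p 1"

text \<open>The defining polynomial of the Kummer function field
  E = K(x)[y] / (y^d - s_{n,i}(x)), as a polynomial in y over K(x).\<close>
definition kummer_poly :: "nat \<Rightarrow> nat \<Rightarrow> nat \<Rightarrow> ('k::field poly fract) poly" where
  "kummer_poly q n i =
     monom 1 ((q ^ n - 1) div (q - 1)) - [: rat_of_poly (esym_q q n i) :]"

text \<open>Canonical representatives of the quotient ring K(x)[y]/(P): the polynomials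
  of degree < deg P, with addition and multiplication followed by reduction mod P.\<close>
definition quot_carrier :: "'a::field poly \<Rightarrow> 'a poly set" where
  "quot_carrier P = {a. degree a < degree P}"

definition K_alg_iso_quot :: "('k::field poly fract) poly \<Rightarrow> ('k poly fract) poly \<Rightarrow> bool" where
  "K_alg_iso_quot P1 P2 \<longleftrightarrow>
     (\<exists>\<phi>. bij_betw \<phi> (quot_carrier P1) (quot_carrier P2) \<and>
        (\<forall>a\<in>quot_carrier P1. \<forall>b\<in>quot_carrier P1.
            \<phi> (a + b) = \<phi> a + \<phi> b \<and> \<phi> ((a * b) mod P1) = (\<phi> a * \<phi> b) mod P2) \<and>
        \<phi> 1 = 1 \<and>
        (\<forall>c::'k. \<phi> [: rat_const c :] = [: rat_const c :]))"

end

theory Submission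
  imports Defs
begin

lemma map_poly_add_hom:
  assumes "\<And>x y. f (x + y) = f x + f y" "f 0 = 0"
  shows "map_poly f (p + q) = map_poly f p + map_poly f q"
  by (rule poly_eqI) (simp add: coeff_map_poly assms)

lemma map_poly_smult_hom:
  assumes "\<And>x y. f (x * y) = f x * f y" "f 0 = 0"
  shows "map_poly f (smult a p) = smult (f a) (map_poly f p)"
  by (rule poly_eqI) (simp add: coeff_map_poly assms)

lemma map_poly_mult_hom:
  fixes f :: "'a::comm_ring_1 \<Rightarrow> 'b::comm_ring_1"
  assumes "\<And>x y. f (x + y) = f x + f y" "\<And>x y. f (x * y) = f x * f y" "f 0 = 0"
  shows "map_poly f (p * q) = map_poly f p * map_poly f q"
proof (induction p)
  case 0 then show ?case by simp
next
  case (pCons a p)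
  have "pCons a p * q = smult a q + pCons 0 (p * q)" by simp
  then have "map_poly f (pCons a p * q) = smult (f a) (map_poly f q) + pCons 0 (map_poly f p * map_poly f q)"
    using pCons by (simp only: map_poly_add_hom[OF assms(1,3)] map_poly_smult_hom[OF assms(2,3)] map_poly_pCons assms(3))
  also have "\<dots> = map_poly f (pCons a p) * map_poly f q"
    by (simp add: map_poly_pCons assms(3))
  finally show ?case .
qed

lemma map_poly_sum_hom:
  assumes "\<And>x y. f (x + y) = f x + f y" "f 0 = 0"
  shows "map_poly f (sum g A) = (\<Sum>x\<in>A. map_poly f (g x))"
  by (induction A rule: infinite_finite_induct) (simp_all add: map_poly_add_hom[OF assms])

lemma map_poly_pcompose_hom:
  fixes f :: "'a::comm_ring_1 \<Rightarrow> 'b::comm_ring_1"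
  assumes "\<And>x y. f (x + y) = f x + f y" "\<And>x y. f (x * y) = f x * f y" "f 0 = 0"
  shows "map_poly f (pcompose p r) = pcompose (map_poly f p) (map_poly f r)"
proof (induction p)
  case 0 then show ?case by simp
next
  case (pCons a p)
  show ?case
    by (simp add: pcompose_pCons map_poly_pCons assms(3) map_poly_add_hom[OF assms(1,3)]
        map_poly_mult_hom[OF assms] pCons)
qed


definition Xf :: "'k::field poly fract" where "Xf = Fract [:0,1:] 1"

definition hh :: "'k::field poly \<Rightarrow> 'k poly fract" where
  "hh p = poly (map_poly rat_const p) (inverse Xf)"

definition sg :: "'k::field poly fract \<Rightarrow> 'k poly fract" where
  "sg z = (let ab = (SOME ab. snd ab \<noteq> 0 \<and> z = Fract (fst ab) (snd ab)) in hh (fst ab) / hh (snd ab))"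

lemma rat_const_add: "rat_const (a + b) = rat_const a + rat_const b"
  by (simp add: rat_const_def)
lemma rat_const_mult: "rat_const (a * b) = rat_const a * rat_const b"
  by (simp add: rat_const_def mult.commute)
lemma rat_const_0[simp]: "rat_const 0 = 0"
  by (simp add: rat_const_def Zero_fract_def)
lemma rat_const_1[simp]: "rat_const 1 = 1"
  by (metis One_fract_def rat_const_def pCons_one)

lemma Xf_nz[simp]: "Xf \<noteq> 0"
  by (simp add: Xf_def Zero_fract_def eq_fract)

lemma eval_X: "poly (map_poly rat_const p) Xf = Fract p 1"
proof (induction p)
  case 0 then show ?case by (simp add: Zero_fract_def)
next
  case (pCons a p)
  have "poly (map_poly rat_const (pCons a p)) Xf = rat_const a + Xf * Fract p 1"
    using pCons by (simp add: map_poly_pCons)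
  also have "\<dots> = Fract (pCons a p) 1"
    by (simp add: rat_const_def Xf_def)
  finally show ?case .
qed

lemma hh_add: "hh (p + q) = hh p + hh q"
  by (simp add: hh_def map_poly_add_hom rat_const_add)
lemma hh_mult: "hh (p * q) = hh p * hh q"
  by (simp add: hh_def map_poly_mult_hom rat_const_add rat_const_mult)
lemma hh_1[simp]: "hh 1 = 1" by (simp add: hh_def)
lemma hh_0[simp]: "hh 0 = 0" by (simp add: hh_def)
lemma hh_const[simp]: "hh [:c:] = rat_const c" by (simp add: hh_def map_poly_pCons)

lemma reflect_map_rat_const:
  "reflect_poly (map_poly rat_const p) = map_poly (rat_const :: 'k::field \<Rightarrow> _) (reflect_poly p)"
proof -
  have inj: "rat_const x \<noteq> 0" if "x \<noteq> 0" for x :: 'k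
    using that by (simp add: rat_const_def Zero_fract_def eq_fract)
  have dg: "degree (map_poly rat_const p) = degree p"
    by (rule degree_map_poly) (use inj in auto)
  show ?thesis
    by (rule poly_eqI) (simp add: coeff_reflect_poly coeff_map_poly dg)
qed

lemma hh_nz: "p \<noteq> 0 \<Longrightarrow> hh p \<noteq> 0"
proof
  assume p: "p \<noteq> 0" and h: "hh p = 0"
  have "poly (reflect_poly (map_poly rat_const p)) Xf = Xf ^ degree (map_poly rat_const p) * hh p"
    by (simp add: poly_reflect_poly_nz hh_def)
  then have "Fract (reflect_poly p) 1 = 0"
    using h by (simp add: reflect_map_rat_const eval_X)
  then have "reflect_poly p = 0" by (simp add: Zero_fract_def eq_fract)
  then have "coeff (reflect_poly p) 0 = 0" by simp
  then show False using p by simp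
qed

lemma sg_Fract: assumes "b \<noteq> 0" shows "sg (Fract a b) = hh a / hh b"
proof -
  define ab where "ab = (SOME ab. snd ab \<noteq> 0 \<and> Fract a b = Fract (fst ab) (snd ab))"
  have "\<exists>ab. snd ab \<noteq> 0 \<and> Fract a b = Fract (fst ab) (snd ab)"
    using assms by (intro exI[of _ "(a,b)"]) simp
  then have ab: "snd ab \<noteq> 0" "Fract a b = Fract (fst ab) (snd ab)"
    unfolding ab_def by (metis (mono_tags, lifting) someI_ex)+
  then have "a * snd ab = fst ab * b" using assms by (simp add: eq_fract)
  then have "hh a * hh (snd ab) = hh (fst ab) * hh b" by (metis hh_mult)
  moreover have "hh b \<noteq> 0" "hh (snd ab) \<noteq> 0" using assms ab by (simp_all add: hh_nz)
  ultimately have "hh (fst ab) / hh (snd ab) = hh a / hh b"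
    by (simp add: field_simps)
  then show ?thesis unfolding sg_def ab_def[symmetric] by simp
qed

lemma sg_add: "sg (x + y) = sg x + sg y"
proof (cases x; cases y)
  fix a b c d assume x: "x = Fract a b" "b \<noteq> (0::'a poly)" and y: "y = Fract c d" "d \<noteq> 0"
  have "hh b \<noteq> 0" "hh d \<noteq> 0" using x y by (simp_all add: hh_nz)
  then show ?thesis using x y
    by (simp add: sg_Fract hh_add hh_mult field_simps)
qed

lemma sg_mult: "sg (x * y) = sg x * sg y"
proof (cases x; cases y)
  fix a b c d assume x: "x = Fract a b" "b \<noteq> (0::'a poly)" and y: "y = Fract c d" "d \<noteq> 0"
  have "hh b \<noteq> 0" "hh d \<noteq> 0" using x y by (simp_all add: hh_nz)
  then show ?thesis using x y
    by (simp add: sg_Fract hh_add hh_mult field_simps)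
qed

lemma sg_0[simp]: "sg 0 = 0"
  by (simp add: Zero_fract_def sg_Fract)
lemma sg_1[simp]: "sg 1 = 1"
  by (simp add: One_fract_def sg_Fract)
lemma sg_const[simp]: "sg (rat_const c) = rat_const c"
  by (simp add: rat_const_def sg_Fract)

lemma sg_inverse: "sg (inverse z) = inverse (sg z)"
proof (cases "z = 0")
  case False
  have "sg z * sg (inverse z) = 1" using False by (simp flip: sg_mult)
  then show ?thesis by (metis inverse_unique)
qed simp

lemma sg_t: "sg (inverse Xf) = Xf"
proof -
  have "hh [:0,1:] = inverse Xf" by (simp add: hh_def map_poly_pCons)
  moreover have "inverse Xf = Fract 1 [:0,1:]" by (simp add: Xf_def)
  ultimately have "sg (inverse Xf) = hh 1 / hh [:0,1:]" by (metis sg_Fract pCons_eq_0_iff one_neq_zero)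
  then have "sg (inverse Xf) = 1 / inverse Xf" using \<open>hh [:0,1:] = inverse Xf\<close> by (metis hh_1)
  then show ?thesis by (metis inverse_eq_divide inverse_inverse_eq)
qed

lemma sg_hh: "sg (hh a) = Fract a 1"
proof (induction a)
  case 0 then show ?case by (metis Zero_fract_def hh_0 sg_0)
next
  case (pCons c a)
  have "hh (pCons c a) = rat_const c + inverse Xf * hh a"
    by (simp add: hh_def map_poly_pCons)
  then have "sg (hh (pCons c a)) = rat_const c + Xf * Fract a 1"
    using pCons by (simp add: sg_add sg_mult sg_t)
  also have "\<dots> = Fract (pCons c a) 1"
    by (simp add: rat_const_def Xf_def)
  finally show ?case .
qed

lemma sg_sg[simp]: "sg (sg z) = z"
proof (cases z)
  case (Fract a b)
  then show ?thesis
    by (simp add: sg_Fract divide_inverse sg_mult sg_inverse sg_hh)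
qed


lemma sg_nz: "x \<noteq> 0 \<Longrightarrow> sg x \<noteq> 0"
  by (metis sg_0 sg_sg)

definition Ph :: "'k::field poly fract poly \<Rightarrow> 'k poly fract poly" where
  "Ph a = pcompose (map_poly sg a) [:0, inverse Xf:]"

lemma Ph_add: "Ph (a + b) = Ph a + Ph b"
  by (simp add: Ph_def map_poly_add_hom sg_add pcompose_add)
lemma Ph_mult: "Ph (a * b) = Ph a * Ph b"
  by (simp add: Ph_def map_poly_mult_hom sg_add sg_mult pcompose_mult)
lemma Ph_diff: "Ph (a - b) = Ph a - Ph b"
  by (metis Ph_add add_diff_cancel_right' diff_add_cancel)
lemma Ph_const: "Ph [:z:] = [:sg z:]"
  by (simp add: Ph_def map_poly_pCons)
lemma Ph_1: "Ph 1 = 1"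
  by (metis Ph_const pCons_one sg_1)
lemma Ph_power: "Ph (p ^ k) = Ph p ^ k"
  by (induction k) (simp_all add: Ph_1 Ph_mult)
lemma degree_Ph: "degree (Ph a) = degree a"
proof -
  have "degree (map_poly sg a) = degree a"
    by (rule degree_map_poly) (simp add: sg_nz)
  then show ?thesis by (simp add: Ph_def degree_pcompose)
qed

lemma Ph_Ph: "Ph (Ph a) = a"
proof -
  have m: "map_poly sg (map_poly sg a) = a"
    by (simp add: map_poly_map_poly o_def)
  have "Ph (Ph a) = pcompose (pcompose a [:0, Xf:]) [:0, inverse Xf:]"
    unfolding Ph_def
    by (simp add: map_poly_pcompose_hom sg_add sg_mult m map_poly_pCons sg_t)
  also have "\<dots> = pcompose a (pcompose [:0, Xf:] [:0, inverse Xf:])"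
    by (simp add: pcompose_assoc)
  also have "pcompose [:0, Xf:] [:0, inverse Xf:] = [:0, 1:]"
    by (simp add: pcompose_pCons)
  finally show ?thesis by simp
qed

lemma Ph_monom: "Ph (monom 1 d) = monom (inverse Xf ^ d) d"
proof -
  have "Ph [:0,1:] = [:0, inverse Xf:]"
    by (simp add: Ph_def map_poly_pCons pcompose_pCons)
  then have "Ph (monom 1 d) = [:0, inverse Xf:] ^ d"
    by (metis monom_altdef smult_1_left Ph_power)
  also have "[:0, inverse Xf:] = monom (inverse Xf) 1"
    by (simp add: monom_Suc monom_0)
  finally show ?thesis by (simp add: monom_power)
qed

lemma eval_esym:
  "poly (map_poly rat_const (esym_q q n i)) w = (\<Sum>S\<in>{S. S \<subseteq> {..<n} \<and> card S = i}. w ^ (\<Sum>j\<in>S. q ^ j))"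
  by (simp add: esym_q_def map_poly_sum_hom rat_const_add map_poly_monom poly_sum poly_monom)

lemma compl_sum:
  fixes w :: "'a::field"
  assumes "w \<noteq> 0" "i \<le> n"
  shows "(\<Sum>S\<in>{S. S \<subseteq> {..<n} \<and> card S = i}. inverse w ^ (\<Sum>j\<in>S. q ^ j))
       = inverse w ^ (\<Sum>j<n. q ^ j) * (\<Sum>T\<in>{T. T \<subseteq> {..<n} \<and> card T = n - i}. w ^ (\<Sum>j\<in>T. q ^ j))"
proof -
  let ?A = "{S. S \<subseteq> {..<n} \<and> card S = i}"
  let ?B = "{T. T \<subseteq> {..<n} \<and> card T = n - i}"
  let ?D = "\<Sum>j<n. q ^ j"
  have bij: "bij_betw (\<lambda>S. {..<n} - S) ?A ?B"
  proof (rule bij_betw_byWitness[where f' = "\<lambda>S. {..<n} - S"])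
    show "\<forall>a\<in>?A. {..<n} - ({..<n} - a) = a" by auto
    show "\<forall>a\<in>?B. {..<n} - ({..<n} - a) = a" by auto
    show "(\<lambda>S. {..<n} - S) ` ?A \<subseteq> ?B"
      by (auto simp: card_Diff_subset finite_subset)
    show "(\<lambda>S. {..<n} - S) ` ?B \<subseteq> ?A"
      using assms(2) by (auto simp: card_Diff_subset finite_subset)
  qed
  have "inverse w ^ ?D * (\<Sum>T\<in>?B. w ^ (\<Sum>j\<in>T. q ^ j))
      = inverse w ^ ?D * (\<Sum>S\<in>?A. w ^ (\<Sum>j\<in>{..<n} - S. q ^ j))"
    using sum.reindex_bij_betw[OF bij, of "\<lambda>T. w ^ (\<Sum>j\<in>T. q ^ j)"] by simp
  also have "\<dots> = (\<Sum>S\<in>?A. inverse w ^ ?D * w ^ (\<Sum>j\<in>{..<n} - S. q ^ j))"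
    by (simp add: sum_distrib_left)
  also have "\<dots> = (\<Sum>S\<in>?A. inverse w ^ (\<Sum>j\<in>S. q ^ j))"
  proof (rule sum.cong[OF refl])
    fix S assume S: "S \<in> ?A"
    then have sub: "S \<subseteq> {..<n}" by simp
    have split: "?D = (\<Sum>j\<in>{..<n} - S. q ^ j) + (\<Sum>j\<in>S. q ^ j)"
      using sum.subset_diff[OF sub] by simp
    have "inverse w ^ ?D * w ^ (\<Sum>j\<in>{..<n} - S. q ^ j)
        = inverse w ^ (\<Sum>j\<in>S. q ^ j) * (inverse w ^ (\<Sum>j\<in>{..<n} - S. q ^ j) * w ^ (\<Sum>j\<in>{..<n} - S. q ^ j))"
      by (subst split) (simp add: power_add mult_ac)
    also have "\<dots> = inverse w ^ (\<Sum>j\<in>S. q ^ j)"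
      using assms(1) by (simp flip: power_mult_distrib)
    finally show "inverse w ^ ?D * w ^ (\<Sum>j\<in>{..<n} - S. q ^ j) = inverse w ^ (\<Sum>j\<in>S. q ^ j)" .
  qed
  finally show ?thesis by simp
qed

lemma hh_esym:
  assumes "i \<le> n"
  shows "hh (esym_q q n i) = inverse Xf ^ (\<Sum>j<n. q ^ j) * Fract (esym_q q n (n - i)) 1"
  unfolding hh_def eval_esym eval_X[symmetric]
  using compl_sum[OF Xf_nz assms] by simp

lemma D_eq:
  assumes "q \<ge> (2::nat)"
  shows "(q ^ n - 1) div (q - 1) = (\<Sum>j<n. q ^ j)"
proof -
  have "int q ^ n - 1 = (int q - 1) * (\<Sum>i<n. int q ^ i)" by (rule power_diff_1_eq)
  then have "int (q ^ n - 1) = int (q - 1) * int (\<Sum>i<n. q ^ i)"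
    using assms by (simp add: of_nat_diff)
  then have "q ^ n - 1 = (q - 1) * (\<Sum>i<n. q ^ i)" by (metis of_nat_eq_iff of_nat_mult)
  then show ?thesis using assms by simp
qed


lemma degree_kummer:
  fixes c :: "'a::field"
  assumes "D > 0"
  shows "degree (monom 1 D - [:c:]) = D"
proof (rule antisym)
  show "degree (monom 1 D - [:c:]) \<le> D"
    by (rule degree_diff_le) (auto simp: degree_monom_eq)
  have "coeff (monom 1 D - [:c:]) D = 1" using assms by (simp add: coeff_pCons split: nat.split)
  then show "D \<le> degree (monom 1 D - [:c:])" by (intro le_degree) simp
qed

theorem lemma4p26:
  fixes q n i :: nat
  assumes "\<exists>p k. prime p \<and> k > 0 \<and> q = p ^ k"
    and "n \<ge> 2"
    and "card (UNIV :: 'k::{field,finite} set) = q ^ n"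
    and "1 \<le> i" and "i \<le> n - 1"
  shows "K_alg_iso_quot (kummer_poly q n i :: ('k poly fract) poly) (kummer_poly q n (n - i))"
proof -
  obtain p k where pk: "prime p" "k > 0" "q = p ^ k" using assms(1) by blast
  have q2: "q \<ge> 2"
  proof -
    have "p \<ge> 2" using pk(1) by (simp add: prime_ge_2_nat)
    moreover have "p ^ 1 \<le> p ^ k" using pk(2) \<open>p \<ge> 2\<close> by (intro power_increasing) auto
    ultimately show ?thesis using pk(3) by simp
  qed
  define D where "D = (\<Sum>j<n. q ^ j)"
  have Dpos: "D > 0" using assms(2) unfolding D_def
    by (intro sum_pos2[of _ 0]) auto
  have in_: "i \<le> n" using assms(5) by simp
  define P1 :: "'k poly fract poly" where "P1 = kummer_poly q n i"
  define P2 :: "'k poly fract poly" where "P2 = kummer_poly q n (n - i)"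
  have P1: "P1 = monom 1 D - [:Fract (esym_q q n i) 1:]"
    unfolding P1_def kummer_poly_def D_eq[OF q2] D_def rat_of_poly_def ..
  have P2: "P2 = monom 1 D - [:Fract (esym_q q n (n - i)) 1:]"
    unfolding P2_def kummer_poly_def D_eq[OF q2] D_def rat_of_poly_def ..
  have dP1: "degree P1 = D" using P1 degree_kummer[OF Dpos] by simp
  have dP2: "degree P2 = D" using P2 degree_kummer[OF Dpos] by simp
  have P2nz: "P2 \<noteq> 0" using dP2 Dpos by auto
  have PhP1: "Ph P1 = smult (inverse Xf ^ D) P2"
  proof -
    have "sg (Fract (esym_q q n i) 1) = inverse Xf ^ D * Fract (esym_q q n (n - i)) 1"
      using hh_esym[OF in_] by (simp add: sg_Fract D_def)
    then show ?thesis
      unfolding P1 P2 by (simp add: Ph_diff Ph_monom Ph_const smult_monom smult_diff_right)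
  qed
  have C: "quot_carrier P1 = {a. degree a < D}" "quot_carrier P2 = {a. degree a < D}"
    by (simp_all add: quot_carrier_def dP1 dP2)
  have bij: "bij_betw Ph (quot_carrier P1) (quot_carrier P2)"
    unfolding C
    by (rule bij_betw_byWitness[where f' = Ph]) (auto simp: Ph_Ph degree_Ph)
  have mul: "Ph ((a * b) mod P1) = (Ph a * Ph b) mod P2" for a b
  proof -
    define r where "r = (a * b) mod P1"
    define d where "d = (a * b) div P1"
    have "a * b = d * P1 + r" unfolding d_def r_def by simp
    then have "Ph a * Ph b = Ph d * Ph P1 + Ph r"
      by (metis Ph_mult Ph_add)
    also have "Ph d * Ph P1 = (Ph d * [:inverse Xf ^ D:]) * P2"
      unfolding PhP1 by (simp add: mult_ac)
    finally have "Ph a * Ph b = Ph r + (Ph d * [:inverse Xf ^ D:]) * P2" by (simp add: add.commute)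
    then have "(Ph a * Ph b) mod P2 = Ph r mod P2" by (simp only: mod_mult_self1)
    also have "\<dots> = Ph r"
    proof (rule mod_poly_less)
      have "P1 \<noteq> 0" using dP1 Dpos by auto
      then have "r = 0 \<or> degree r < degree P1" unfolding r_def by (rule degree_mod_less)
      then show "degree (Ph r) < degree P2"
        using dP1 dP2 Dpos by (auto simp: degree_Ph)
    qed
    finally show ?thesis unfolding r_def by simp
  qed
  show ?thesis
    unfolding K_alg_iso_quot_def P1_def[symmetric] P2_def[symmetric]
    by (intro exI[of _ Ph] conjI bij ballI allI)
       (simp_all add: Ph_add mul Ph_1 Ph_const rat_const_def sg_Fract)
qed

end
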